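(* Let $G$ be a graph without isolated vertices and let $T$ be a solution counting decision tree for $\varphi(G)$. Let $u$ be a node of $T$ labelled by a variable $x$, and let $S\subseteq V(G)$ be such that no two elements of $S$ are adjacent or have a common neighbour in $G$, and no element of $S$ is forced to $1$ by $A_u$. Then $weight(\mathbf{P}^u(S))\leq \alpha^u(S)$.
   Context: $\varphi(G)$ is the CNF on variables $V(G)$ with clauses $(u\vee v)$ for all $\{u,v\}\in E(G)$. Boolean functions are identified with their sets of satisfying assignments (sets of literals); for a set $S$ of literals, the restriction $F|_S$ is the function on the remaining variables whose satisfying assignments are those $S'$ with $S\cup S'$ satisfying $F$. Decision tree for a function $F$ that is not constant false: the root is labelled by some variable $x\in Var(F)$; for each literal $\ell\in\{x,\neg x\}$ occurring in some satisfying assignment of $F$, the root has an outgoing edge labelled $\ell$; if $|Var(F)|=1$ its head is an unlabelled leaf, otherwise its head is the root of a decision tree for $F|_\ell$. A solution counting decision tree (SCDT) for $F$ is a decision tree for $F$ in which an edge leaving node $w$ labelled by literal $\ell$ has weight $|F|_{A_w\cup\{\ell\}}|/|F|_{A_w}|$, where $A_w$ is the set of literals labelling the root-$w$ path. The weight of a path is the product of its edge weights, and the weight of a set of paths is the sum of their weights. A variable $y\in V(G)$ is forced to $1$ by $A_u$ if some neighbour $z$ of $y$ in $G$ satisfies $\neg z\in A_u$. $N^u(y)$ is the set of neighbours $z$ of $y$ such that $z$ does not occur in $A_u$ and $z$ is not forced to $1$ by $A_u$. For $d\geq 0$, $c_d=1-2^{-(2d+1)}$, and for $S\subseteq V(G)$,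 $\alpha^u(S)=\prod_{y\in S}c_{|N^u(y)|}$. Identifying $S$ with the set of positive literals of its elements, $\mathbf{P}^u(S)$ is the set of paths $P$ of $T$ from $u$ to a leaf such that $S\subseteq A(P)$, where $A(P)$ is the set of literals labelling the edges of $P$. *)

theory Defs
  imports Complex_Main
begin

definition simple_graph :: "'v set \<Rightarrow> ('v \<Rightarrow> 'v \<Rightarrow> bool) \<Rightarrow> bool" where
  "simple_graph V E \<longleftrightarrow> finite V \<and> (\<forall>u v. E u v \<longrightarrow> u \<in> V \<and> v \<in> V)
     \<and> (\<forall>u v. E u v \<longrightarrow> E v u) \<and> (\<forall>u. \<not> E u u)"

text \<open>Literals are pairs (variable, value); assignments are sets of literals.
  Satisfying assignments of phi(G): total consistent assignments on V satisfying
  every clause (u or v) for each edge {u,v}.\<close>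
definition phi_sat :: "'v set \<Rightarrow> ('v \<Rightarrow> 'v \<Rightarrow> bool) \<Rightarrow> ('v \<times> bool) set set" where
  "phi_sat V E = {B. B \<subseteq> V \<times> UNIV \<and> (\<forall>v\<in>V. ((v, True) \<in> B) \<noteq> ((v, False) \<in> B))
     \<and> (\<forall>u v. E u v \<longrightarrow> (u, True) \<in> B \<or> (v, True) \<in> B)}"

definition count_restr :: "('v \<times> bool) set set \<Rightarrow> ('v \<times> bool) set \<Rightarrow> nat" where
  "count_restr F A = card {B \<in> F. A \<subseteq> B}"

text \<open>Decision trees: a node labelled by a variable has an optional child for the
  negative literal (first) and for the positive literal (second).\<close>
datatype 'v dtree = Leaf | Node 'v "'v dtree option" "'v dtree option"

definition child :: "bool \<Rightarrow> 'v dtree option \<Rightarrow> 'v dtree option \<Rightarrow> 'v dtree option" where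
  "child b c0 c1 = (if b then c1 else c0)"

text \<open>is_dt Vs F A t: t is a decision tree for F|_A, where F has variables Vs and
  satisfying assignments F (so F|_A has variables Vs minus the variables of A).\<close>
fun is_dt :: "'v set \<Rightarrow> ('v \<times> bool) set set \<Rightarrow> ('v \<times> bool) set \<Rightarrow> 'v dtree \<Rightarrow> bool" where
  "is_dt Vs F A Leaf = False"
| "is_dt Vs F A (Node x c0 c1) =
     ((\<exists>B\<in>F. A \<subseteq> B) \<and> x \<in> Vs - fst ` A \<and>
      (case c0 of
         None \<Rightarrow> \<not> (\<exists>B\<in>F. insert (x, False) A \<subseteq> B)
       | Some t \<Rightarrow> (\<exists>B\<in>F. insert (x, False) A \<subseteq> B) \<and>
           (if card (Vs - fst ` A) = 1 then t = Leaf else is_dt Vs F (insert (x, False) A) t)) \<and>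
      (case c1 of
         None \<Rightarrow> \<not> (\<exists>B\<in>F. insert (x, True) A \<subseteq> B)
       | Some t \<Rightarrow> (\<exists>B\<in>F. insert (x, True) A \<subseteq> B) \<and>
           (if card (Vs - fst ` A) = 1 then t = Leaf else is_dt Vs F (insert (x, True) A) t)))"

text \<open>Solution counting decision tree for phi(G): a decision tree for phi(G); its edge
  weights are then determined (see edge_weight / path_weight below).\<close>
definition scdt :: "'v set \<Rightarrow> ('v \<Rightarrow> 'v \<Rightarrow> bool) \<Rightarrow> 'v dtree \<Rightarrow> bool" where
  "scdt V E T = is_dt V (phi_sat V E) {} T"

text \<open>Nodes are addressed by the list of edge directions (False = negative literal,
  True = positive literal) from the root.\<close>
fun subtree :: "'v dtree \<Rightarrow> bool list \<Rightarrow> 'v dtree option" where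
  "subtree t [] = Some t"
| "subtree Leaf (b # bs) = None"
| "subtree (Node x c0 c1) (b # bs) =
     (case child b c0 c1 of None \<Rightarrow> None | Some t \<Rightarrow> subtree t bs)"

fun lits :: "'v dtree \<Rightarrow> bool list \<Rightarrow> ('v \<times> bool) set" where
  "lits t [] = {}"
| "lits Leaf (b # bs) = {}"
| "lits (Node x c0 c1) (b # bs) =
     insert (x, b) (case child b c0 c1 of None \<Rightarrow> {} | Some t \<Rightarrow> lits t bs)"

text \<open>Weight of the path that starts at node p and follows directions q:
  product of the edge weights |F|_{A_w \<union> {l}}| / |F|_{A_w}|.\<close>
definition path_weight :: "('v \<times> bool) set set \<Rightarrow> 'v dtree \<Rightarrow> bool list \<Rightarrow> bool list \<Rightarrow> real" where
  "path_weight F T p q = (\<Prod>i<length q.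
      real (count_restr F (lits T (p @ take (Suc i) q))) / real (count_restr F (lits T (p @ take i q))))"

definition paths_S :: "'v dtree \<Rightarrow> bool list \<Rightarrow> 'v set \<Rightarrow> bool list set" where
  "paths_S T p S = {q. subtree T (p @ q) = Some Leaf \<and>
      (\<forall>t'. subtree T p = Some t' \<longrightarrow> (\<lambda>y. (y, True)) ` S \<subseteq> lits t' q)}"

definition weight_paths :: "('v \<times> bool) set set \<Rightarrow> 'v dtree \<Rightarrow> bool list \<Rightarrow> bool list set \<Rightarrow> real" where
  "weight_paths F T p Q = (\<Sum>q\<in>Q. path_weight F T p q)"

definition forced :: "('v \<Rightarrow> 'v \<Rightarrow> bool) \<Rightarrow> ('v \<times> bool) set \<Rightarrow> 'v \<Rightarrow> bool" where
  "forced E A y \<longleftrightarrow> (\<exists>z. E y z \<and> (z, False) \<in> A)"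

definition Nu :: "('v \<Rightarrow> 'v \<Rightarrow> bool) \<Rightarrow> ('v \<times> bool) set \<Rightarrow> 'v \<Rightarrow> 'v set" where
  "Nu E A y = {z. E y z \<and> z \<notin> fst ` A \<and> \<not> forced E A z}"

definition c_const :: "nat \<Rightarrow> real" where
  "c_const d = 1 - 1 / 2 ^ (2 * d + 1)"

definition alpha :: "('v \<Rightarrow> 'v \<Rightarrow> bool) \<Rightarrow> ('v \<times> bool) set \<Rightarrow> 'v set \<Rightarrow> real" where
  "alpha E A S = (\<Prod>y\<in>S. c_const (card (Nu E A y)))"

end

theory Submission
  imports Defs
begin


lemma phi_sat_finite: "finite V \<Longrightarrow> finite (phi_sat V E)"
proof -
  assume "finite V"
  hence "finite (Pow (V \<times> (UNIV::bool set)))" by simp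
  moreover have "phi_sat V E \<subseteq> Pow (V \<times> UNIV)" unfolding phi_sat_def by auto
  ultimately show ?thesis by (rule finite_subset[rotated])
qed

lemma count_split:
  assumes "finite V" "y \<in> V"
  shows "count_restr (phi_sat V E) A = count_restr (phi_sat V E) (insert (y,True) A)
     + count_restr (phi_sat V E) (insert (y,False) A)"
proof -
  let ?F = "phi_sat V E"
  have eq: "{B \<in> ?F. A \<subseteq> B} = {B \<in> ?F. insert (y,True) A \<subseteq> B} \<union> {B \<in> ?F. insert (y,False) A \<subseteq> B}"
    using assms(2) unfolding phi_sat_def by auto
  have dis: "{B \<in> ?F. insert (y,True) A \<subseteq> B} \<inter> {B \<in> ?F. insert (y,False) A \<subseteq> B} = {}"
    using assms(2) unfolding phi_sat_def by auto
  have fin: "finite ?F" using phi_sat_finite assms(1) by blast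
  show ?thesis unfolding count_restr_def eq
    by (rule card_Un_disjoint) (use fin dis in auto)
qed

lemma flip_lemma:
  assumes sg: "simple_graph V E" and yV: "y \<in> V" and ya: "y \<notin> fst ` A" and nf: "\<not> forced E A y"
  shows "count_restr (phi_sat V E) (insert (y,True) A) \<le> 2 ^ card (Nu E A y) * count_restr (phi_sat V E) (insert (y,False) A)"
proof -
  let ?F = "phi_sat V E"
  let ?N = "Nu E A y"
  define Xp where "Xp = {B \<in> ?F. insert (y,True) A \<subseteq> B}"
  define Xn where "Xn = {B \<in> ?F. insert (y,False) A \<subseteq> B}"
  define f where "f B = (B - {(y,True)} - (\<lambda>z. (z,False)) ` ?N) \<union> {(y,False)} \<union> (\<lambda>z. (z,True)) ` ?N" for B
  have finV: "finite V" and EV: "\<And>u v. E u v \<Longrightarrow> u \<in> V \<and> v \<in> V" and Esym: "\<And>u v. E u v \<Longrightarrow> E v u"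
    and Eirr: "\<And>u. \<not> E u u" using sg unfolding simple_graph_def by auto
  have NV: "?N \<subseteq> V" unfolding Nu_def using EV by auto
  have yN: "y \<notin> ?N" unfolding Nu_def using Eirr by auto
  have finN: "finite ?N" using NV finV finite_subset by blast
  have finF: "finite ?F" using phi_sat_finite finV by blast
  have finXp: "finite Xp" unfolding Xp_def using finF by simp
  have finXn: "finite Xn" unfolding Xn_def using finF by simp
  have fmap: "f B \<in> Xn" if B: "B \<in> Xp" for B
  proof -
    have BF: "B \<in> ?F" and AB: "A \<subseteq> B" and yB: "(y,True) \<in> B" using B unfolding Xp_def by auto
    have Bsub: "B \<subseteq> V \<times> UNIV" and Bcons: "\<forall>v\<in>V. ((v, True) \<in> B) \<noteq> ((v, False) \<in> B)"
      and Bcl: "\<forall>u v. E u v \<longrightarrow> (u, True) \<in> B \<or> (v, True) \<in> B" using BF unfolding phi_sat_def by auto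
    have keep: "(v,True) \<in> B" if "E y v" "v \<notin> ?N" for v
    proof -
      have "v \<in> fst ` A \<or> forced E A v" using that unfolding Nu_def by auto
      thus ?thesis
      proof
        assume "v \<in> fst ` A"
        then obtain b where vb: "(v,b) \<in> A" by force
        have "b = True"
        proof (rule ccontr)
          assume "b \<noteq> True" hence "(v,False) \<in> A" using vb by simp
          hence "forced E A y" unfolding forced_def using that(1) by blast
          thus False using nf by simp
        qed
        thus ?thesis using vb AB by auto
      next
        assume "forced E A v"
        then obtain w where w: "E v w" "(w,False) \<in> A" unfolding forced_def by blast
        have "w \<in> V" using EV w(1) by blast
        hence "(w,True) \<notin> B" using Bcons w(2) AB by auto
        thus ?thesis using Bcl w(1) by blast
      qed
    qed
    have s1: "f B \<subseteq> V \<times> UNIV" unfolding f_def using Bsub NV yV by auto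
    have s2: "\<forall>v\<in>V. ((v, True) \<in> f B) \<noteq> ((v, False) \<in> f B)"
    proof
      fix v assume vV: "v \<in> V"
      show "((v, True) \<in> f B) \<noteq> ((v, False) \<in> f B)"
      proof (cases "v = y")
        case True thus ?thesis unfolding f_def using yN by auto
      next
        case False
        show ?thesis
        proof (cases "v \<in> ?N")
          case True thus ?thesis unfolding f_def using False by auto
        next
          case nN: False
          have "((v, True) \<in> f B) = ((v, True) \<in> B)" "((v, False) \<in> f B) = ((v, False) \<in> B)"
            unfolding f_def using False nN by auto
          thus ?thesis using Bcons vV by simp
        qed
      qed
    qed
    have s3: "\<forall>u v. E u v \<longrightarrow> (u, True) \<in> f B \<or> (v, True) \<in> f B"
    proof (intro allI impI)
      fix u v assume uv: "E u v"
      have pres: "(w,True) \<in> f B" if "(w,True) \<in> B" "w \<noteq> y" for w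
        unfolding f_def using that by auto
      have inN: "(w,True) \<in> f B" if "w \<in> ?N" for w unfolding f_def using that by auto
      show "(u, True) \<in> f B \<or> (v, True) \<in> f B"
      proof (cases "u = y")
        case True
        hence "v \<noteq> y" using uv Eirr by auto
        thus ?thesis
        proof (cases "v \<in> ?N")
          case True thus ?thesis using inN by blast
        next
          case False thus ?thesis using keep[of v] uv \<open>u = y\<close> pres \<open>v \<noteq> y\<close> by simp
        qed
      next
        case uy: False
        show ?thesis
        proof (cases "v = y")
          case True
          show ?thesis
          proof (cases "u \<in> ?N")
            case True thus ?thesis using inN by blast
          next
            case False thus ?thesis using keep[of u] Esym[OF uv] \<open>v = y\<close> pres uy by simp
          qed
        next
          case False
          have "(u, True) \<in> B \<or> (v, True) \<in> B" using Bcl uv by blast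
          thus ?thesis using pres uy False by blast
        qed
      qed
    qed
    have s4: "insert (y,False) A \<subseteq> f B"
    proof -
      have "A \<subseteq> f B"
      proof
        fix l assume l: "l \<in> A"
        obtain v b where lv: "l = (v,b)" by force
        have "v \<notin> ?N" using l lv unfolding Nu_def by force
        moreover have "v \<noteq> y" using l lv ya by force
        ultimately show "l \<in> f B" unfolding f_def using l lv AB by auto
      qed
      thus ?thesis unfolding f_def by auto
    qed
    show ?thesis unfolding Xn_def phi_sat_def using s1 s2 s3 s4 by auto
  qed
  have fib: "card {B \<in> Xp. f B = C} \<le> 2 ^ card ?N" for C
  proof -
    let ?g = "\<lambda>B. {z \<in> ?N. (z,True) \<in> B}"
    have "inj_on ?g {B \<in> Xp. f B = C}"
    proof (rule inj_onI)
      fix B B' assume B: "B \<in> {B \<in> Xp. f B = C}" and B': "B' \<in> {B \<in> Xp. f B = C}"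
        and g: "?g B = ?g B'"
      have BF: "B \<in> ?F" "B' \<in> ?F" and yB: "(y,True) \<in> B" "(y,True) \<in> B'" and fe: "f B = f B'"
        using B B' unfolding Xp_def by auto
      have Bsub: "B \<subseteq> V \<times> UNIV" "B' \<subseteq> V \<times> UNIV"
        and Bcons: "\<forall>v\<in>V. ((v, True) \<in> B) \<noteq> ((v, False) \<in> B)" "\<forall>v\<in>V. ((v, True) \<in> B') \<noteq> ((v, False) \<in> B')"
        using BF unfolding phi_sat_def by auto
      show "B = B'"
      proof (rule set_eqI)
        fix l
        show "l \<in> B \<longleftrightarrow> l \<in> B'"
        proof -
        obtain v b where lv: "l = (v,b)" by force
        show ?thesis
        proof (cases "v \<in> V")
          case False thus ?thesis using Bsub lv by auto
        next
          case vV: True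
          show ?thesis
          proof (cases "v = y")
            case True thus ?thesis using Bcons yV yB lv by (cases b) auto
          next
            case vy: False
            show ?thesis
            proof (cases "v \<in> ?N")
              case True
              have "((v,True) \<in> B) = ((v,True) \<in> B')" using g True by blast
              thus ?thesis using Bcons vV lv by (cases b) auto
            next
              case False
              have "(l \<in> B) = (l \<in> f B)" "(l \<in> B') = (l \<in> f B')" unfolding f_def using lv vy False by auto
              thus ?thesis using fe by simp
            qed
          qed
        qed
        qed
      qed
    qed
    moreover have "?g ` {B \<in> Xp. f B = C} \<subseteq> Pow ?N" by auto
    ultimately have "card {B \<in> Xp. f B = C} \<le> card (Pow ?N)"
      by (intro card_inj_on_le) (use finN in auto)
    thus ?thesis using card_Pow[OF finN] by simp
  qed
  have "Xp = (\<Union>C\<in>f ` Xp. {B \<in> Xp. f B = C})" by auto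
  hence "card Xp \<le> (\<Sum>C\<in>f ` Xp. card {B \<in> Xp. f B = C})"
    using card_UN_le[of "f ` Xp" "\<lambda>C. {B \<in> Xp. f B = C}"] finXp by simp
  also have "\<dots> \<le> (\<Sum>C\<in>f ` Xp. 2 ^ card ?N)" by (rule sum_mono) (rule fib)
  also have "\<dots> = card (f ` Xp) * 2 ^ card ?N" by simp
  also have "\<dots> \<le> card Xn * 2 ^ card ?N"
  proof -
    have "f ` Xp \<subseteq> Xn" using fmap by auto
    hence "card (f ` Xp) \<le> card Xn" using card_mono finXn by blast
    thus ?thesis by simp
  qed
  finally show ?thesis unfolding count_restr_def Xp_def Xn_def by (simp add: mult.commute)
qed



lemma subtree_append: "subtree t (p @ q) = (case subtree t p of None \<Rightarrow> None | Some s \<Rightarrow> subtree s q)"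
proof (induction p arbitrary: t)
  case Nil thus ?case by simp
next
  case (Cons b bs) thus ?case
    by (cases t) (auto split: option.splits)
qed

lemma lits_append: "subtree t p = Some s \<Longrightarrow> lits t (p @ q) = lits t p \<union> lits s q"
proof (induction p arbitrary: t)
  case Nil thus ?case by simp
next
  case (Cons b bs)
  show ?case
  proof (cases t)
    case Leaf thus ?thesis using Cons.prems by simp
  next
    case (Node x c0 c1)
    obtain t1 where ch: "child b c0 c1 = Some t1" and st: "subtree t1 bs = Some s"
      using Cons.prems Node by (auto split: option.splits)
    have "lits t1 (bs @ q) = lits t1 bs \<union> lits s q" using Cons.IH st by blast
    thus ?thesis using Node ch by simp
  qed
qed

lemma dt_step:
  assumes "is_dt Vs F A (Node x c0 c1)" "child b c0 c1 = Some t1"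
  shows "x \<in> Vs - fst ` A \<and> (if card (Vs - fst ` A) = 1 then t1 = Leaf else is_dt Vs F (insert (x,b) A) t1)"
proof (cases b)
  case True
  hence c: "c1 = Some t1" using assms(2) by (simp add: child_def)
  have "x \<in> Vs - fst ` A" using assms(1) by (simp only: is_dt.simps; blast)
  moreover have "(case c1 of
         None \<Rightarrow> \<not> (\<exists>B\<in>F. insert (x, True) A \<subseteq> B)
       | Some t \<Rightarrow> (\<exists>B\<in>F. insert (x, True) A \<subseteq> B) \<and>
           (if card (Vs - fst ` A) = 1 then t = Leaf else is_dt Vs F (insert (x, True) A) t))"
    using assms(1) by (simp only: is_dt.simps; blast)
  ultimately show ?thesis using c True by (simp only: option.case; blast)
next
  case False
  hence c: "c0 = Some t1" using assms(2) by (simp add: child_def)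
  have "x \<in> Vs - fst ` A" using assms(1) by (simp only: is_dt.simps; blast)
  moreover have "(case c0 of
         None \<Rightarrow> \<not> (\<exists>B\<in>F. insert (x, False) A \<subseteq> B)
       | Some t \<Rightarrow> (\<exists>B\<in>F. insert (x, False) A \<subseteq> B) \<and>
           (if card (Vs - fst ` A) = 1 then t = Leaf else is_dt Vs F (insert (x, False) A) t))"
    using assms(1) by (simp only: is_dt.simps; blast)
  ultimately show ?thesis using c False by (simp only: option.case; blast)
qed

lemma L1: "is_dt Vs F A t \<Longrightarrow> subtree t q = Some s \<Longrightarrow>
  fst ` lits t q \<subseteq> Vs - fst ` A \<and> (s \<noteq> Leaf \<longrightarrow> is_dt Vs F (A \<union> lits t q) s)"
proof (induction q arbitrary: t A s)
  case Nil thus ?case by simp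
next
  case (Cons b bs)
  show ?case
  proof (cases t)
    case Leaf thus ?thesis using Cons.prems by simp
  next
    case (Node x c0 c1)
    obtain t1 where ch: "child b c0 c1 = Some t1" and st: "subtree t1 bs = Some s"
      using Cons.prems(2) Node by (auto split: option.splits)
    have lt: "lits t (b # bs) = insert (x,b) (lits t1 bs)" using Node ch by simp
    have H: "x \<in> Vs - fst ` A \<and> (if card (Vs - fst ` A) = 1 then t1 = Leaf else is_dt Vs F (insert (x,b) A) t1)"
      using dt_step[OF _ ch] Cons.prems(1) Node by blast
    show ?thesis
    proof (cases "card (Vs - fst ` A) = 1")
      case True
      hence "t1 = Leaf" using H by simp
      hence "bs = [] \<and> s = Leaf" using st by (cases bs) auto
      thus ?thesis using lt H \<open>t1 = Leaf\<close> by simp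
    next
      case False
      hence d: "is_dt Vs F (insert (x,b) A) t1" using H by simp
      from Cons.IH[OF d st] show ?thesis using lt H by auto
    qed
  qed
qed

lemma L2: "is_dt Vs F A t \<Longrightarrow> subtree t q = Some Leaf \<Longrightarrow> subtree t q' = Some Leaf \<Longrightarrow> q \<noteq> q' \<Longrightarrow>
  \<exists>v b. (v,b) \<in> lits t q \<and> (v, \<not> b) \<in> lits t q'"
proof (induction q arbitrary: t A q')
  case Nil thus ?case by simp
next
  case (Cons b bs)
  obtain b' bs' where q': "q' = b' # bs'" using Cons.prems(1,3) by (cases q') auto
  show ?case
  proof (cases t)
    case Leaf thus ?thesis using Cons.prems by simp
  next
    case (Node x c0 c1)
    obtain t1 where ch: "child b c0 c1 = Some t1" and st: "subtree t1 bs = Some Leaf"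
      using Cons.prems(2) Node by (auto split: option.splits)
    obtain t1' where ch': "child b' c0 c1 = Some t1'" and st': "subtree t1' bs' = Some Leaf"
      using Cons.prems(3) Node q' by (auto split: option.splits)
    have lt: "lits t (b # bs) = insert (x,b) (lits t1 bs)" using Node ch by simp
    have lt': "lits t q' = insert (x,b') (lits t1' bs')" using Node ch' q' by simp
    show ?thesis
    proof (cases "b = b'")
      case False
      thus ?thesis using lt lt' by (intro exI[of _ x] exI[of _ b]) auto
    next
      case True
      hence t11: "t1' = t1" and bsne: "bs \<noteq> bs'" using ch ch' Cons.prems(4) q' by auto
      have H: "x \<in> Vs - fst ` A \<and> (if card (Vs - fst ` A) = 1 then t1 = Leaf else is_dt Vs F (insert (x,b) A) t1)"
        using dt_step[OF _ ch] Cons.prems(1) Node by blast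
      show ?thesis
      proof (cases "card (Vs - fst ` A) = 1")
        case True
        hence "t1 = Leaf" using H by simp
        hence "bs = [] \<and> bs' = []" using st st' t11 by (cases bs; cases bs') auto
        thus ?thesis using bsne by simp
      next
        case False
        hence d: "is_dt Vs F (insert (x,b) A) t1" using H by simp
        from Cons.IH[OF d st st'[unfolded t11] bsne] obtain v c where
          vc: "(v,c) \<in> lits t1 bs" "(v, \<not> c) \<in> lits t1 bs'" by blast
        have "(v,c) \<in> lits t (b # bs)" using vc(1) lt by simp
        moreover have "(v, \<not> c) \<in> lits t q'" using vc(2) lt' t11 by simp
        ultimately show ?thesis by blast
      qed
    qed
  qed
qed

lemma tele:
  fixes a :: "nat \<Rightarrow> real"
  assumes "\<And>i. a i \<ge> 0"
  shows "(\<Prod>i<Suc n. a (Suc i) / a i) \<le> a (Suc n) / a 0"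
proof (induction n)
  case 0 thus ?case by simp
next
  case (Suc n)
  have "(\<Prod>i<Suc (Suc n). a (Suc i) / a i) = (\<Prod>i<Suc n. a (Suc i) / a i) * (a (Suc (Suc n)) / a (Suc n))"
    by simp
  also have "\<dots> \<le> a (Suc (Suc n)) / a 0"
  proof (cases "a (Suc n) = 0")
    case True thus ?thesis using assms by simp
  next
    case False
    have nn: "a (Suc (Suc n)) / a (Suc n) \<ge> 0" using assms by simp
    have "(\<Prod>i<Suc n. a (Suc i) / a i) * (a (Suc (Suc n)) / a (Suc n)) \<le> a (Suc n) / a 0 * (a (Suc (Suc n)) / a (Suc n))"
      by (rule mult_right_mono[OF Suc nn])
    also have "\<dots> = a (Suc (Suc n)) / a 0" using False by simp
    finally show ?thesis .
  qed
  finally show ?case .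
qed



lemma c_arith:
  fixes a b :: real
  assumes "0 \<le> a" "0 \<le> b" "a \<le> 2 ^ d * b"
  shows "a \<le> c_const d * (a + b)"
proof -
  define k :: real where "k = 2 ^ d"
  have k1: "k \<ge> 1" unfolding k_def by simp
  have "(2::real) ^ (2 * d) = 2 ^ d * 2 ^ d" by (metis mult_2 power_add)
  hence p: "(2::real) ^ (2 * d + 1) = 2 * k * k" unfolding k_def by simp
  have "a + b \<le> (k + 1) * b" using assms unfolding k_def by (simp add: algebra_simps)
  also have "\<dots> \<le> (2 * k * k) * b"
  proof (rule mult_right_mono[OF _ assms(2)])
    have "k \<le> k * k" using k1 by (simp add: mult_le_cancel_left1)
    thus "k + 1 \<le> 2 * k * k" using k1 by linarith
  qed
  finally have "(a + b) / (2 * k * k) \<le> b" using k1 by (simp add: divide_le_eq mult.commute)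
  hence "a \<le> (a + b) - (a + b) / (2 * k * k)" by linarith
  also have "\<dots> = c_const d * (a + b)" unfolding c_const_def p by (simp add: algebra_simps)
  finally show ?thesis .
qed

lemma single_bound:
  assumes sg: "simple_graph V E" and yV: "y \<in> V" and ya: "y \<notin> fst ` A" and nf: "\<not> forced E A y"
  shows "real (count_restr (phi_sat V E) (insert (y,True) A)) \<le> c_const (card (Nu E A y)) * real (count_restr (phi_sat V E) A)"
proof -
  have finV: "finite V" using sg unfolding simple_graph_def by auto
  have s: "count_restr (phi_sat V E) A = count_restr (phi_sat V E) (insert (y,True) A) + count_restr (phi_sat V E) (insert (y,False) A)"
    using count_split[OF finV yV] by blast
  have f: "real (count_restr (phi_sat V E) (insert (y,True) A)) \<le> 2 ^ card (Nu E A y) * real (count_restr (phi_sat V E) (insert (y,False) A))"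
    using flip_lemma[OF sg yV ya nf] by (metis of_nat_le_iff of_nat_mult of_nat_numeral of_nat_power)
  show ?thesis unfolding s using c_arith[OF _ _ f] by simp
qed

lemma forced_plus: "forced E (A \<union> (\<lambda>y. (y,True)) ` P) z = forced E A z"
  unfolding forced_def by auto

lemma Nu_plus: "\<forall>z\<in>P. \<not> E y z \<Longrightarrow> Nu E (A \<union> (\<lambda>y. (y,True)) ` P) y = Nu E A y"
  unfolding Nu_def forced_plus by (auto simp: image_Un image_image)

lemma c_nonneg: "c_const d \<ge> 0"
proof -
  have "(1::real) \<le> 2 ^ (2 * d + 1)" by (rule one_le_power) simp
  hence "1 / (2::real) ^ (2 * d + 1) \<le> 1" by simp
  thus ?thesis unfolding c_const_def by linarith
qed

lemma alpha_nonneg: "alpha E A S \<ge> 0"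
  unfolding alpha_def by (rule prod_nonneg) (simp add: c_nonneg)

lemma count_S:
  assumes sg: "simple_graph V E" and fin: "finite S"
  shows "S \<subseteq> V \<longrightarrow> (\<forall>y\<in>S. \<forall>y'\<in>S. y \<noteq> y' \<longrightarrow> \<not> E y y') \<longrightarrow> (\<forall>y\<in>S. y \<notin> fst ` A \<and> \<not> forced E A y) \<longrightarrow>
    real (count_restr (phi_sat V E) (A \<union> (\<lambda>y. (y,True)) ` S)) \<le> alpha E A S * real (count_restr (phi_sat V E) A)"
  using fin
proof (induction S rule: finite_induct)
  case empty thus ?case by (simp add: alpha_def)
next
  case (insert y S')
  show ?case
  proof (intro impI)
    assume sub: "insert y S' \<subseteq> V" and ind: "\<forall>u\<in>insert y S'. \<forall>u'\<in>insert y S'. u \<noteq> u' \<longrightarrow> \<not> E u u'"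
      and un: "\<forall>u\<in>insert y S'. u \<notin> fst ` A \<and> \<not> forced E A u"
    let ?A' = "A \<union> (\<lambda>y. (y,True)) ` S'"
    have IH: "real (count_restr (phi_sat V E) ?A') \<le> alpha E A S' * real (count_restr (phi_sat V E) A)"
      using insert.IH sub ind un by blast
    have yA': "y \<notin> fst ` ?A'" using un insert.hyps(2) by (auto simp: image_Un image_image)
    have nf: "\<not> forced E ?A' y" using un forced_plus by (metis insertI1)
    have nE: "\<forall>z\<in>S'. \<not> E y z"
    proof
      fix z assume z: "z \<in> S'"
      hence "y \<noteq> z" using insert.hyps(2) by blast
      thus "\<not> E y z" using ind z by blast
    qed
    have Neq: "Nu E ?A' y = Nu E A y" using Nu_plus[of S' E y A] nE by blast
    have eqA: "A \<union> (\<lambda>y. (y,True)) ` insert y S' = insert (y,True) ?A'" by auto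
    have "real (count_restr (phi_sat V E) (A \<union> (\<lambda>y. (y,True)) ` insert y S'))
        \<le> c_const (card (Nu E A y)) * real (count_restr (phi_sat V E) ?A')"
      unfolding eqA using single_bound[OF sg _ yA' nf] sub Neq by simp
    also have "\<dots> \<le> c_const (card (Nu E A y)) * (alpha E A S' * real (count_restr (phi_sat V E) A))"
      by (rule mult_left_mono[OF IH c_nonneg])
    also have "\<dots> = alpha E A (insert y S') * real (count_restr (phi_sat V E) A)"
      unfolding alpha_def using insert.hyps by simp
    finally show "real (count_restr (phi_sat V E) (A \<union> (\<lambda>y. (y,True)) ` insert y S')) \<le> alpha E A (insert y S') * real (count_restr (phi_sat V E) A)" .
  qed
qed



theorem theorem6:
  fixes V :: "'v set" and E :: "'v \<Rightarrow> 'v \<Rightarrow> bool" and T :: "'v dtree"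
    and p :: "bool list" and x :: 'v and c0 c1 :: "'v dtree option" and S :: "'v set"
  assumes "simple_graph V E"
    and "\<forall>v\<in>V. \<exists>w. E v w"
    and "scdt V E T"
    and "subtree T p = Some (Node x c0 c1)"
    and "S \<subseteq> V"
    and "\<forall>y\<in>S. \<forall>y'\<in>S. y \<noteq> y' \<longrightarrow> \<not> E y y' \<and> \<not> (\<exists>z. E y z \<and> E y' z)"
    and "\<forall>y\<in>S. \<not> forced E (lits T p) y"
  shows "weight_paths (phi_sat V E) T p (paths_S T p S) \<le> alpha E (lits T p) S"
proof -
  note sg = assms(1)
  define F where "F = phi_sat V E"
  define A where "A = lits T p"
  define s where "s = Node x c0 c1"
  define Q where "Q = paths_S T p S"
  have finV: "finite V" using sg unfolding simple_graph_def by auto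
  have finF: "finite F" unfolding F_def using phi_sat_finite finV by blast
  have dtT: "is_dt V F {} T" using assms(3) unfolding scdt_def F_def by simp
  have sp: "subtree T p = Some s" using assms(4) unfolding s_def by simp
  have dts: "is_dt V F A s" using L1[OF dtT sp] unfolding A_def s_def by simp
  have Qprop: "subtree s q = Some Leaf \<and> (\<lambda>y. (y,True)) ` S \<subseteq> lits s q \<and> lits T (p @ q) = A \<union> lits s q"
    if "q \<in> Q" for q
  proof -
    have "subtree T (p @ q) = Some Leaf" "(\<lambda>y. (y,True)) ` S \<subseteq> lits s q"
      using that sp unfolding Q_def paths_S_def by auto
    thus ?thesis using subtree_append[of T p q] sp lits_append[OF sp] unfolding A_def by simp
  qed
  have litsV: "fst ` lits s q \<subseteq> V - fst ` A" if "q \<in> Q" for q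
    using L1[OF dts] Qprop[OF that] by blast
  have ann: "alpha E A S \<ge> 0" by (rule alpha_nonneg)
  show ?thesis
  proof (cases "(\<exists>y\<in>S. y \<in> fst ` A) \<or> infinite Q")
    case True
    have "Q = {} \<or> infinite Q"
    proof (cases "infinite Q")
      case False
      then obtain y where y: "y \<in> S" "y \<in> fst ` A" using True by blast
      have "q \<notin> Q" for q
      proof
        assume q: "q \<in> Q"
        hence "(y,True) \<in> lits s q" using Qprop y(1) by blast
        hence "y \<in> fst ` lits s q" by force
        thus False using litsV[OF q] y(2) by blast
      qed
      thus ?thesis by blast
    qed simp
    hence "weight_paths F T p Q = 0" unfolding weight_paths_def by auto
    thus ?thesis using ann unfolding F_def Q_def A_def by simp
  next
    case False
    hence finQ: "finite Q" and un: "\<forall>y\<in>S. y \<notin> fst ` A" by auto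
    let ?cnt = "\<lambda>L. real (count_restr F L)"
    have pw: "path_weight F T p q \<le> ?cnt (A \<union> lits s q) / ?cnt A" if q: "q \<in> Q" for q
    proof -
      have "q \<noteq> []" using Qprop[OF q] unfolding s_def by auto
      then obtain n where n: "length q = Suc n" by (cases q) auto
      define a where "a i = ?cnt (lits T (p @ take i q))" for i
      have "path_weight F T p q = (\<Prod>i<Suc n. a (Suc i) / a i)"
        unfolding path_weight_def a_def n by simp
      also have "\<dots> \<le> a (Suc n) / a 0" by (rule tele) (simp add: a_def)
      also have "\<dots> = ?cnt (A \<union> lits s q) / ?cnt A"
        unfolding a_def using n[symmetric] Qprop[OF q] unfolding A_def by simp
      finally show ?thesis .
    qed
    define X where "X q = {B \<in> F. A \<union> lits s q \<subseteq> B}" for q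
    have finX: "finite (X q)" for q unfolding X_def using finF by simp
    have disj: "X q \<inter> X q' = {}" if qq: "q \<in> Q" "q' \<in> Q" "q \<noteq> q'" for q q'
    proof -
      obtain v b where vb: "(v,b) \<in> lits s q" "(v, \<not> b) \<in> lits s q'"
        using L2[OF dts _ _ qq(3)] Qprop qq by blast
      have vV: "v \<in> V" using litsV[OF qq(1)] vb(1) by force
      show ?thesis
      proof (rule ccontr)
        assume "X q \<inter> X q' \<noteq> {}"
        then obtain B where B: "B \<in> F" "(v,b) \<in> B" "(v, \<not> b) \<in> B" using vb unfolding X_def by blast
        thus False using vV unfolding F_def phi_sat_def by (cases b) auto
      qed
    qed
    have "weight_paths F T p Q \<le> (\<Sum>q\<in>Q. ?cnt (A \<union> lits s q) / ?cnt A)"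
      unfolding weight_paths_def by (rule sum_mono) (rule pw)
    also have "\<dots> = (\<Sum>q\<in>Q. ?cnt (A \<union> lits s q)) / ?cnt A" by (simp add: sum_divide_distrib)
    also have "(\<Sum>q\<in>Q. ?cnt (A \<union> lits s q)) = real (\<Sum>q\<in>Q. card (X q))"
      unfolding X_def count_restr_def by simp
    also have "(\<Sum>q\<in>Q. card (X q)) = card (\<Union>q\<in>Q. X q)"
      using card_UN_disjoint[OF finQ, of X] finX disj by auto
    also have "card (\<Union>q\<in>Q. X q) \<le> count_restr F (A \<union> (\<lambda>y. (y,True)) ` S)"
    proof -
      have "(\<Union>q\<in>Q. X q) \<subseteq> {B \<in> F. A \<union> (\<lambda>y. (y,True)) ` S \<subseteq> B}"
        unfolding X_def using Qprop by blast
      thus ?thesis unfolding count_restr_def by (rule card_mono[rotated]) (simp add: finF)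
    qed
    hence "real (card (\<Union>q\<in>Q. X q)) / ?cnt A \<le> ?cnt (A \<union> (\<lambda>y. (y,True)) ` S) / ?cnt A"
      by (simp add: divide_right_mono)
    also have "\<dots> \<le> alpha E A S"
    proof (cases "?cnt A = 0")
      case True thus ?thesis using ann by simp
    next
      case False
      have finS: "finite S" using assms(5) finV finite_subset by blast
      have indep: "\<forall>y\<in>S. \<forall>y'\<in>S. y \<noteq> y' \<longrightarrow> \<not> E y y'" using assms(6) by blast
      have "?cnt (A \<union> (\<lambda>y. (y,True)) ` S) \<le> alpha E A S * ?cnt A"
        using count_S[OF sg finS, of A] assms(5,7) indep un unfolding F_def A_def by blast
      thus ?thesis using False by (simp add: divide_le_eq)
    qed
    finally show ?thesis unfolding F_def Q_def A_def .
  qed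
qed

end
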